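(* Let $q,W$ be positive integers and $a,b,h$ integers with $\gcd(W,b)=\gcd(q,a)=1$. Then $|R^\ast_{W,b}(q,a,h)|\le\gcd(h,q)$.
   Context: $e(z)=e^{2\pi iz}$. $R^\ast_{W,b}(q,a,h)=\sum_{1\le c\le qW,\ \gcd(c,q)=1,\ c\equiv b\ (\mathrm{mod}\ W)}e\big(\frac{ach}{qW}\big)$. Here $\gcd(0,q)=q$. *)

theory Defs
  imports "HOL-Analysis.Analysis" "HOL-Number_Theory.Cong"
begin

definition e :: "real \<Rightarrow> complex" where
  "e z = exp (2 * of_real pi * \<i> * of_real z)"

definition Rstar :: "int \<Rightarrow> int \<Rightarrow> int \<Rightarrow> int \<Rightarrow> int \<Rightarrow> complex" where
  "Rstar W b q a h =
     (\<Sum>c\<in>{c \<in> {1..q*W}. gcd c q = 1 \<and> [c = b] (mod W)}.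
        e (real_of_int (a * c * h) / real_of_int (q * W)))"

end

theory Submission imports Defs "HOL-Computational_Algebra.Primes" begin

lemma e_add: "e (x + y) = e x * e y"
  unfolding e_def by (simp add: distrib_left exp_add)

lemma e_int: "e (of_int k) = 1"
proof -
  have "e (of_int k) = exp ((2 * of_int k * pi) * \<i>)" unfolding e_def by (simp add: ac_simps)
  also have "\<dots> = 1" by (rule exp_integer_2pi) simp
  finally show ?thesis .
qed

lemma norm_e: "norm (e x) = 1"
  unfolding e_def by (simp add: norm_exp_eq_Re)

lemma e_pow: "e x ^ n = e (of_nat n * x)"
  unfolding e_def by (simp add: exp_of_nat_mult[symmetric] ac_simps)

lemma e_eq_1: assumes "e x = 1" shows "x \<in> \<int>"
proof -
  from assms have "exp (complex_of_real (2 * pi * x) * \<i>) = 1" unfolding e_def by (simp add: ac_simps)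
  then obtain n :: int where "Im (complex_of_real (2 * pi * x) * \<i>) = of_int (2 * n) * pi"
    unfolding exp_eq_1 by blast
  then have "x = of_int n" by simp
  then show ?thesis by simp
qed

lemma geo:
  assumes "p > 0"
  shows "(\<Sum>s<p. e (of_int A * of_nat s / of_nat p)) = (if int p dvd A then of_nat p else 0)"
proof (cases "int p dvd A")
  case True
  then obtain k where A: "A = int p * k" by blast
  have "e (of_int A * of_nat s / of_nat p) = 1" for s
  proof -
    have "of_int A * of_nat s / of_nat p = (of_int (k * int s) :: real)" using assms by (simp add: A)
    then show ?thesis using e_int[of "k * int s"] by simp
  qed
  then show ?thesis using True by simp
next
  case False
  define z where "z = e (of_int A / of_nat p)"
  have zs: "e (of_int A * of_nat s / of_nat p) = z ^ s" for s
    unfolding z_def e_pow by (simp add: field_simps)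
  have "z \<noteq> 1"
  proof
    assume "z = 1"
    then have "(of_int A / of_nat p :: real) \<in> \<int>" unfolding z_def by (rule e_eq_1)
    then obtain k where "(of_int A / of_nat p :: real) = of_int k" by (auto elim: Ints_cases)
    then have "(of_int A :: real) = of_int (int p * k)" using assms by (simp add: field_simps)
    then have "A = int p * k" by linarith
    then show False using False by simp
  qed
  have zp: "z ^ p = 1" using zs[of p] assms by (simp add: e_int)
  show ?thesis using False \<open>z \<noteq> 1\<close> zp by (simp add: zs geometric_sum)
qed

lemma dec:
  fixes g :: "nat \<Rightarrow> 'a::comm_monoid_add"
  shows "(\<Sum>t<(n * p). g t) = (\<Sum>s<p. \<Sum>r<n. g (r + n * s))"
proof -
  have "(\<Sum>t<(n * p). g t) = (\<Sum>s<p. sum g {s * n..<s * n+n})"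
    using sum.nat_group[of g n p] by (simp add: mult.commute)
  also have "\<dots> = (\<Sum>s<p. \<Sum>r<n. g (r + n * s))"
  proof (rule sum.cong[OF refl])
    fix s
    have "sum g {s * n..<s * n+n} = sum g {0+s * n..<n+s * n}" by (simp add: add.commute)
    also have "\<dots> = (\<Sum>r=0..<n. g (r + s * n))" by (rule sum.shift_bounds_nat_ivl)
    finally show "sum g {s * n..<s * n+n} = (\<Sum>r<n. g (r + n * s))" by (simp add: atLeast0LessThan mult.commute)
  qed
  finally show ?thesis .
qed

lemma periodic_mult:
  fixes f :: "nat \<Rightarrow> 'a"
  assumes "\<And>t. f (t + n) = f t"
  shows "f (r + n * s) = f r"
proof (induction s)
  case (Suc s)
  have "f (r + n * Suc s) = f ((r + n * s) + n)" by (simp add: algebra_simps)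
  then show ?case using assms Suc by simp
qed simp

lemma periodic_mod:
  fixes f :: "nat \<Rightarrow> 'a"
  assumes "\<And>t. f (t + n) = f t"
  shows "f t = f (t mod n)"
  using periodic_mult[of f n "t mod n" "t div n", OF assms] by simp

lemma per:
  fixes c :: "nat \<Rightarrow> complex"
  assumes per: "\<And>t. c (t + n) = c t" and n: "n > 0" and p: "p > 0"
  shows "(\<Sum>t<(n * p). c t * e (of_int A * of_nat t / of_nat (n * p))) =
    (if int p dvd A then of_nat p * (\<Sum>r<n. c r * e (of_int (A div int p) * of_nat r / of_nat n)) else 0)"
proof -
  have "(\<Sum>t<(n * p). c t * e (of_int A * of_nat t / of_nat (n * p))) =
     (\<Sum>s<p. \<Sum>r<n. c (r + n * s) * e (of_int A * of_nat (r + n * s) / of_nat (n * p)))"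
    by (rule dec)
  also have "\<dots> = (\<Sum>s<p. \<Sum>r<n. (c r * e (of_int A * of_nat r / of_nat (n * p))) * e (of_int A * of_nat s / of_nat p))"
  proof (intro sum.cong refl)
    fix s r
    have "of_int A * of_nat (r + n * s) / of_nat (n * p) = of_int A * of_nat r / of_nat (n * p) + (of_int A * of_nat s / of_nat p :: real)"
      using n p by (simp add: field_simps)
    then show "c (r + n * s) * e (of_int A * of_nat (r + n * s) / of_nat (n * p)) = (c r * e (of_int A * of_nat r / of_nat (n * p))) * e (of_int A * of_nat s / of_nat p)"
      by (simp add: e_add periodic_mult[of c, OF per])
  qed
  also have "\<dots> = (\<Sum>r<n. c r * e (of_int A * of_nat r / of_nat (n * p))) * (\<Sum>s<p. e (of_int A * of_nat s / of_nat p))"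
    by (subst sum_product) (rule sum.swap)
  also have "\<dots> = (if int p dvd A then of_nat p * (\<Sum>r<n. c r * e (of_int (A div int p) * of_nat r / of_nat n)) else 0)"
  proof (cases "int p dvd A")
    case True
    then obtain k where A: "A = int p * k" by blast
    have "of_int A * of_nat r / of_nat (n * p) = (of_int (A div int p) * of_nat r / of_nat n :: real)" for r
      using p n by (simp add: A field_simps)
    then show ?thesis using True p by (simp add: geo mult.commute)
  next
    case False then show ?thesis using p by (simp add: geo)
  qed
  finally show ?thesis .
qed

lemma bij_shift:
  fixes f :: "nat \<Rightarrow> 'a::comm_monoid_add"
  assumes per: "\<And>t. f (t + n) = f t" and n: "n > 0" and cop: "coprime p n"
  shows "(\<Sum>u<n. f (j + p * u)) = (\<Sum>r<n. f r)"
proof -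
  define h where "h u = (j + p * u) mod n" for u
  have inj: "inj_on h {..<n}"
  proof (rule inj_onI)
    fix u v assume u: "u \<in> {..<n}" and v: "v \<in> {..<n}" and eq: "h u = h v"
    then have "[j + p * u = j + p * v] (mod n)" unfolding h_def cong_def by simp
    then have "[p * u = p * v] (mod n)" by (simp add: cong_add_lcancel_nat)
    then have "[u = v] (mod n)" using cop by (simp add: cong_mult_lcancel_nat)
    then show "u = v" using u v by (simp add: cong_def)
  qed
  have img: "h ` {..<n} = {..<n}"
  proof (rule card_subset_eq)
    show "h ` {..<n} \<subseteq> {..<n}" using n by (auto simp: h_def)
    show "card (h ` {..<n}) = card {..<n}" using inj by (simp add: card_image)
  qed simp
  have "(\<Sum>u<n. f (j + p * u)) = (\<Sum>u<n. f (h u))"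
    unfolding h_def by (intro sum.cong refl periodic_mod[of f n, OF per])
  also have "\<dots> = (\<Sum>r\<in>h ` {..<n}. f r)" using inj by (simp add: sum.reindex)
  finally show ?thesis using img by simp
qed

lemma prime_coprime_int: "prime p \<Longrightarrow> coprime x (int p) \<longleftrightarrow> \<not> int p dvd x"
proof
  assume "prime p" "coprime x (int p)"
  then show "\<not> int p dvd x"
    by (metis coprime_common_divisor dvd_refl not_prime_unit prime_nat_int_transfer)
next
  assume "prime p" "\<not> int p dvd x"
  then show "coprime x (int p)"
    by (metis coprime_commute prime_imp_coprime prime_nat_int_transfer)
qed

lemma small_dvd:
  assumes "int j - int j0 = int p * k" "j < p" "j0 < p"
  shows "j = j0"
proof -
  consider "k = 0" | "k \<ge> 1" | "k \<le> -1" by linarith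
  then show ?thesis
  proof cases
    case 2
    then have "int p * k \<ge> int p * 1" by (intro mult_left_mono) auto
    then show ?thesis using assms by linarith
  next
    case 3
    then have "int p * k \<le> int p * (-1)" by (intro mult_left_mono) auto
    then show ?thesis using assms by linarith
  qed (use assms in simp)
qed

lemma exists_j0:
  assumes "prime p" "\<not> int p dvd W"
  shows "\<exists>j0<p. int p dvd b + W * int j0 \<and> (\<forall>j<p. int p dvd b + W * int j \<longrightarrow> j = j0)"
proof -
  have pp: "prime (int p)" using assms by simp
  have p0: "p > 0" using assms prime_gt_0_nat by blast
  have "coprime W (int p)" using prime_coprime_int assms by blast
  then have "gcd W (int p) = 1" by simp
  then obtain u v where uv: "u * W + v * int p = 1" using bezout_int[of W "int p"] by auto
  define j0 where "j0 = nat ((- b * u) mod int p)"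
  have j0i: "int j0 = (- b * u) mod int p" unfolding j0_def using p0 by simp
  have m: "(-b*u) mod int p = -b*u - ((-b*u) div int p) * int p" by (simp add: minus_div_mult_eq_mod)
  have "b + W * int j0 = int p * (b * v - W * ((-b*u) div int p))"
    unfolding j0i m using uv by algebra
  then have d0: "int p dvd b + W * int j0" by simp
  have lt: "j0 < p" unfolding j0_def using p0 by (simp add: nat_less_iff)
  have uniq: "j = j0" if "j < p" "int p dvd b + W * int j" for j
  proof -
    have "int p dvd (b + W * int j) - (b + W * int j0)" using that(2) d0 by (rule dvd_diff)
    moreover have "(b + W * int j) - (b + W * int j0) = W * (int j - int j0)" by (simp add: algebra_simps)
    ultimately have "int p dvd W * (int j - int j0)" by simp
    then have "int p dvd (int j - int j0)" using pp assms by (simp add: prime_dvd_mult_iff)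
    then obtain k where "int j - int j0 = int p * k" by blast
    then show ?thesis using small_dvd that lt by blast
  qed
  show ?thesis using d0 lt uniq by blast
qed

definition Fs :: "nat \<Rightarrow> int \<Rightarrow> int \<Rightarrow> int \<Rightarrow> complex" where
  "Fs q b W A = (\<Sum>t<q. (if coprime (b + W * int t) (int q) then 1 else 0) * e (of_int A * of_nat t / of_nat q))"

lemma coprime_add_mult_int: "coprime (x + k * m) (m::int) = coprime x m"
  by (metis coprime_iff_gcd_eq_1 gcd.commute gcd_add_mult add.commute)

lemma e_period: "e (of_int A * of_nat (t + n) / of_nat n) = e (of_int A * of_nat t / of_nat n)" if "n > 0"
proof -
  have "of_int A * of_nat (t + n) / of_nat n = of_int A * of_nat t / of_nat n + (of_int A :: real)"
    using that by (simp add: field_simps)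
  then show ?thesis by (simp add: e_add e_int)
qed

lemma cn_period: "(if coprime (b + W * int (t + n)) (int n) then 1 else 0 :: complex) =
   (if coprime (b + W * int t) (int n) then 1 else 0)"
proof -
  have eq: "b + W * int (t + n) = (b + W * int t) + W * int n" by (simp add: algebra_simps)
  show ?thesis by (simp only: eq coprime_add_mult_int)
qed

lemma Fs_1: "Fs 1 b W A = 1"
  unfolding Fs_def by (simp add: e_int[of 0, simplified])

lemma main: "0 < q \<Longrightarrow> norm (Fs q b W A) \<le> of_int (gcd A (int q))"
proof (induction q arbitrary: b W A rule: less_induct)
  case (less q)
  show ?case
  proof (cases "q = 1")
    case True then show ?thesis using Fs_1[of b W A] by simp
  next
    case False
    then obtain p where p: "prime p" "p dvd q" using prime_factor_nat by blast
    then obtain n where qn: "q = n * p" by (metis dvd_def mult.commute)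
    have p2: "p \<ge> 2" using p by (simp add: prime_ge_2_nat)
    have n0: "n > 0" using less.prems qn by simp
    have nq: "n < q" using qn p2 n0 by simp
    have IH: "\<And>b W A. norm (Fs n b W A) \<le> of_int (gcd A (int n))" using less.IH nq n0 by blast
    define cn where "cn t = (if coprime (b + W * int t) (int n) then 1 else 0 :: complex)" for t
    have cnper: "\<And>t. cn (t + n) = cn t" unfolding cn_def by (rule cn_period)
    have FsnA: "Fs n b W A' = (\<Sum>r<n. cn r * e (of_int A' * of_nat r / of_nat n))" for A'
      unfolding Fs_def cn_def ..
    define S1 where "S1 = (\<Sum>t<n*p. cn t * e (of_int A * of_nat t / of_nat (n*p)))"
    have S1eq: "S1 = (if int p dvd A then of_nat p * Fs n b W (A div int p) else 0)"
      unfolding S1_def FsnA using per[of cn n p A, OF cnper n0] p2 n0 by simp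
    have gcdp: "gcd A (int (n*p)) = int p * gcd (A div int p) (int n)" if "int p dvd A"
    proof -
      from that obtain k where "A = int p * k" by blast
      then show ?thesis using gcd_mult_distrib_int[of "int p" k "int n"] by (simp add: mult.commute)
    qed
    have B1: "norm S1 \<le> of_int (gcd A (int q))"
    proof (cases "int p dvd A")
      case True
      have "norm S1 = of_nat p * norm (Fs n b W (A div int p))" using True by (simp add: S1eq norm_mult)
      also have "\<dots> \<le> of_nat p * of_int (gcd (A div int p) (int n))"
        using IH by (intro mult_left_mono) auto
      also have "\<dots> = of_int (gcd A (int q))" using gcdp[OF True] qn by simp
      finally show ?thesis .
    qed (simp add: S1eq)
    define dq where "dq t = (if coprime (b + W * int t) (int p) then 1 else 0 :: complex)" for t
    have Fsq: "Fs q b W A = (\<Sum>t<n*p. cn t * dq t * e (of_int A * of_nat t / of_nat (n*p)))"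
      unfolding Fs_def cn_def dq_def qn by (intro sum.cong refl) auto
    show ?thesis
    proof (cases "p dvd n")
      case True
      then obtain k where nk: "n = p * k" by blast
      have "Fs q b W A = S1" unfolding Fsq S1_def
        by (intro sum.cong refl) (auto simp: cn_def dq_def nk)
      then show ?thesis using B1 by simp
    next
      case pn: False
      have cop: "coprime p n" using p pn by (simp add: prime_imp_coprime)
      show ?thesis
      proof (cases "int p dvd W")
        case True
        have dqb: "dq t = (if int p dvd b then 0 else 1)" for t
        proof -
          have "int p dvd b + W * int t \<longleftrightarrow> int p dvd b" using True by (simp add: dvd_add_left_iff)
          then show ?thesis unfolding dq_def using prime_coprime_int[OF p(1)] by simp
        qed
        show ?thesis
        proof (cases "int p dvd b")
          case True
          then show ?thesis unfolding Fsq dqb by simp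
        next
          case False
          then have "Fs q b W A = S1" unfolding Fsq S1_def dqb by simp
          then show ?thesis using B1 by simp
        qed
      next
        case pW: False
        define d where "d t = (if int p dvd b + W * int t then 1 else 0 :: complex)" for t
        have dqd: "dq t = 1 - d t" for t unfolding dq_def d_def using prime_coprime_int[OF p(1)] by simp
        define G where "G = (\<Sum>t<n*p. cn t * d t * e (of_int A * of_nat t / of_nat (n*p)))"
        have FSG: "Fs q b W A = S1 - G" unfolding Fsq S1_def G_def dqd
          by (simp add: algebra_simps sum_subtractf)
        obtain j0 where j0: "j0 < p" "int p dvd b + W * int j0"
          "\<And>j. j < p \<Longrightarrow> int p dvd b + W * int j \<Longrightarrow> j = j0"
          using exists_j0[OF p(1) pW, of b] by blast
        have dshift: "d (j + p * u) = d j" for j u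
        proof -
          have eq: "b + W * int (j + p * u) = (b + W * int j) + (W * int u) * int p" by (simp add: algebra_simps)
          show ?thesis unfolding d_def eq dvd_add_times_triv_right_iff ..
        qed
        have lt_eq: "{..<n*p} = {..<p*n}" by (simp add: mult.commute)
        have Gj: "G = (\<Sum>u<n. cn (j0 + p * u) * e (of_int A * of_nat (j0 + p * u) / of_nat (n*p)))"
        proof -
          have "G = (\<Sum>u<n. \<Sum>j<p. cn (j + p * u) * d (j + p * u) * e (of_int A * of_nat (j + p * u) / of_nat (n*p)))"
            unfolding G_def lt_eq by (rule dec)
          also have "\<dots> = (\<Sum>u<n. \<Sum>j<p. if j = j0 then cn (j0 + p * u) * e (of_int A * of_nat (j0 + p * u) / of_nat (n*p)) else 0)"
          proof (intro sum.cong refl)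
            fix u j assume jp: "j \<in> {..<p}"
            show "cn (j + p * u) * d (j + p * u) * e (of_int A * of_nat (j + p * u) / of_nat (n*p)) =
              (if j = j0 then cn (j0 + p * u) * e (of_int A * of_nat (j0 + p * u) / of_nat (n*p)) else 0)"
            proof (cases "j = j0")
              case True
              have "d (j + p * u) = 1" unfolding dshift using j0(2) True by (simp add: d_def)
              then show ?thesis using True by simp
            next
              case False
              then have "\<not> int p dvd b + W * int j" using j0(3) jp by blast
              then have "d (j + p * u) = 0" unfolding dshift by (simp add: d_def)
              then show ?thesis using False by simp
            qed
          qed
          also have "\<dots> = (\<Sum>u<n. cn (j0 + p * u) * e (of_int A * of_nat (j0 + p * u) / of_nat (n*p)))"
            using j0(1) by simp
          finally show ?thesis .
        qed
        show ?thesis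
        proof (cases "int p dvd A")
          case False
          have copA: "coprime A (int p)" using prime_coprime_int[OF p(1)] False by simp
          have "G = e (of_int A * of_nat j0 / of_nat (n*p)) * Fs n (b + W * int j0) (W * int p) A"
            unfolding Gj Fs_def sum_distrib_left
          proof (intro sum.cong refl)
            fix u
            have e1: "of_int A * of_nat (j0 + p * u) / of_nat (n*p) = of_int A * of_nat j0 / of_nat (n*p) + (of_int A * of_nat u / of_nat n :: real)"
              using n0 p2 by (simp add: field_simps)
            have c1: "b + W * int (j0 + p * u) = b + W * int j0 + W * int p * int u" by (simp add: algebra_simps)
            show "cn (j0 + p * u) * e (of_int A * of_nat (j0 + p * u) / of_nat (n*p)) =
               e (of_int A * of_nat j0 / of_nat (n*p)) * ((if coprime (b + W * int j0 + W * int p * int u) (int n) then 1 else 0) * e (of_int A * of_nat u / of_nat n))"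
              unfolding cn_def e1 c1 e_add by simp
          qed
          then have "norm G \<le> of_int (gcd A (int n))" using IH by (simp add: norm_mult norm_e)
          also have "gcd A (int n) = gcd A (int q)" unfolding qn using copA
            by (simp add: gcd_mult_right_right_cancel)
          finally show ?thesis using FSG S1eq False by simp
        next
          case True
          define A' where "A' = A div int p"
          have AA: "A = int p * A'" unfolding A'_def using True by simp
          define f where "f t = cn t * e (of_int A' * of_nat t / of_nat n)" for t
          have fper: "f (t + n) = f t" for t unfolding f_def using cnper e_period n0 by simp
          have "G = (\<Sum>u<n. f (j0 + p * u))" unfolding Gj f_def
          proof (intro sum.cong refl)
            fix u
            have "of_int A * of_nat (j0 + p * u) / of_nat (n*p) = (of_int A' * of_nat (j0 + p * u) / of_nat n :: real)"
              using n0 p2 by (simp add: AA field_simps)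
            then show "cn (j0 + p * u) * e (of_int A * of_nat (j0 + p * u) / of_nat (n*p)) = cn (j0 + p * u) * e (of_int A' * of_nat (j0 + p * u) / of_nat n)" by simp
          qed
          also have "\<dots> = (\<Sum>r<n. f r)" using bij_shift[of f n p j0, OF fper n0 cop] by simp
          also have "\<dots> = Fs n b W A'" unfolding FsnA f_def ..
          finally have "Fs q b W A = (of_nat p - 1) * Fs n b W A'" using FSG S1eq True A'_def by (simp add: algebra_simps)
          moreover have nm: "cmod (complex_of_nat p - 1) = real p - 1"
          proof -
            have "complex_of_nat p - 1 = complex_of_nat (p - 1)" using p2 by (simp add: of_nat_diff)
            then have "cmod (complex_of_nat p - 1) = real (p - 1)" by (simp only: norm_of_nat)
            then show ?thesis using p2 by (simp add: of_nat_diff)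
          qed
          ultimately have "norm (Fs q b W A) = (of_nat p - 1) * norm (Fs n b W A')" by (simp add: norm_mult)
          also have "\<dots> \<le> of_nat p * norm (Fs n b W A')" by (simp add: algebra_simps)
          also have "\<dots> \<le> of_nat p * of_int (gcd A' (int n))" using IH by (intro mult_left_mono) auto
          also have "\<dots> = of_int (gcd A (int q))" using gcdp[OF True] qn A'_def by simp
          finally show ?thesis .
        qed
      qed
    qed
  qed
qed

theorem lemma2p11:
  fixes q W a b h :: int
  assumes "q > 0" and "W > 0"
    and "gcd W b = 1" and "gcd q a = 1"
  shows "norm (Rstar W b q a h) \<le> real_of_int (gcd h q)"
proof -
  define Q where "Q = nat q"
  have Qq: "int Q = q" using assms by (simp add: Q_def)
  have Q0: "Q > 0" using assms by (simp add: Q_def)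
  define b0 where "b0 = (b - 1) mod W + 1"
  have b01: "1 \<le> b0" using assms by (simp add: b0_def)
  have b0W: "b0 \<le> W"
  proof -
    have "(b - 1) mod W < W" using assms(2) by (rule pos_mod_bound)
    then show ?thesis unfolding b0_def by linarith
  qed
  have b0c: "[b0 = b] (mod W)" unfolding b0_def cong_def by (simp add: mod_add_left_eq)
  define \<phi> where "\<phi> t = b0 + W * int t" for t
  define T where "T = {t \<in> {..<Q}. coprime (b0 + W * int t) q}"
  have inj: "inj_on \<phi> T" using assms by (auto simp: inj_on_def \<phi>_def)
  have img: "{c \<in> {1..q*W}. gcd c q = 1 \<and> [c = b] (mod W)} = \<phi> ` T"
  proof (intro set_eqI iffI)
    fix c assume "c \<in> {c \<in> {1..q*W}. gcd c q = 1 \<and> [c = b] (mod W)}"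
    then have c1: "1 \<le> c" and c2: "c \<le> q * W" and cg: "gcd c q = 1" and cc: "[c = b] (mod W)" by auto
    have "[c = b0] (mod W)" using cc b0c cong_sym cong_trans by blast
    then have "W dvd c - b0" by (simp add: cong_iff_dvd_diff)
    then obtain k where k: "c - b0 = W * k" by blast
    have k0: "k \<ge> 0"
    proof (rule ccontr)
      assume "\<not> k \<ge> 0"
      then have "W * k \<le> W * (-1)" using assms by (intro mult_left_mono) auto
      then show False using k c1 b0W by linarith
    qed
    have kq: "k < q"
    proof (rule ccontr)
      assume "\<not> k < q"
      then have "W * k \<ge> W * q" using assms by (intro mult_left_mono) auto
      then show False using k c2 b01 by (simp add: algebra_simps)
    qed
    define t where "t = nat k"
    have ct: "c = \<phi> t" using k k0 by (simp add: \<phi>_def t_def)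
    have "t \<in> T" unfolding T_def using kq k0 Qq cg ct by (auto simp: t_def \<phi>_def coprime_iff_gcd_eq_1)
    then show "c \<in> \<phi> ` T" using ct by blast
  next
    fix c assume "c \<in> \<phi> ` T"
    then obtain t where t: "t < Q" "coprime (b0 + W * int t) q" and c: "c = b0 + W * int t"
      by (auto simp: T_def \<phi>_def)
    have "int t \<le> q - 1" using t Qq by linarith
    then have "W * int t \<le> W * (q - 1)" using assms by (intro mult_left_mono) auto
    then have "c \<le> q * W" using c b0W by (simp add: algebra_simps)
    moreover have "c \<ge> 1"
    proof -
      have "W * int t \<ge> 0" using assms by simp
      then show ?thesis using c b01 by linarith
    qed
    moreover have "gcd c q = 1" using t c by simp
    moreover have "[c = b] (mod W)"
    proof -
      have "[b0 + W * int t = b0] (mod W)" by (simp add: cong_def)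
      then show ?thesis using b0c c cong_trans by blast
    qed
    ultimately show "c \<in> {c \<in> {1..q*W}. gcd c q = 1 \<and> [c = b] (mod W)}" by simp
  qed
  define E where "E = e (of_int (a * b0 * h) / of_int (q * W))"
  have "Rstar W b q a h = (\<Sum>c\<in>\<phi> ` T. e (of_int (a * c * h) / of_int (q * W)))"
    unfolding Rstar_def img ..
  also have "\<dots> = (\<Sum>t\<in>T. e (of_int (a * \<phi> t * h) / of_int (q * W)))"
    using inj by (simp add: sum.reindex)
  also have "\<dots> = (\<Sum>t\<in>T. E * e (of_int (a * h) * of_nat t / of_nat Q))"
  proof (intro sum.cong refl)
    fix t
    have "real_of_int (a * \<phi> t * h) / of_int (q * W) = of_int (a * b0 * h) / of_int (q * W) + of_int (a * h) * of_nat t / of_nat Q"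
    proof -
      have rQ: "real Q = real_of_int q" using Qq by (metis of_int_of_nat_eq)
      show ?thesis using assms unfolding rQ \<phi>_def by (simp add: field_simps)
    qed
    then show "e (of_int (a * \<phi> t * h) / of_int (q * W)) = E * e (of_int (a * h) * of_nat t / of_nat Q)"
      by (simp add: E_def e_add)
  qed
  also have "\<dots> = E * Fs Q b0 W (a * h)"
    unfolding Fs_def sum_distrib_left[symmetric] T_def Qq
    by (subst sum.inter_filter) (auto intro: sum.cong)
  finally have R: "Rstar W b q a h = E * Fs Q b0 W (a * h)" .
  have "norm (Rstar W b q a h) = norm (Fs Q b0 W (a * h))" unfolding R E_def by (simp add: norm_mult norm_e)
  also have "\<dots> \<le> of_int (gcd (a * h) (int Q))" by (rule main[OF Q0])
  also have "gcd (a * h) (int Q) = gcd h q"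
    unfolding Qq using assms(4) by (simp add: gcd_mult_left_left_cancel coprime_iff_gcd_eq_1)
  finally show ?thesis .
qed

end
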